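(* Let $F$ and $G$ be the distribution functions of laws $P$ and $Q$ on $\mathbb R$ such that $P(\mathbb Z)=1$, $G$ is continuous and strictly increasing, and $P$ and $Q$ are both symmetric about $\frac n2$ for some $n\in\mathbb R$. Let $d:=F(\lfloor\frac n2\rfloor)-G(\lfloor\frac n2\rfloor)$. Then $n\in\mathbb Z$, $d=G(\lceil\frac n2\rceil-)-F(\lceil\frac n2\rceil-)$, and $$d=\begin{cases}G(\frac{n+1}2)-\frac12,& n\text{ odd},\\ \frac12P(\{\frac n2\}),& n\text{ even}.\end{cases}$$ Furthermore, the statement "for every $s\in\mathbb R$: $|F(s)-G(s)|<d$ if $s\ne\lfloor\frac n2\rfloor$, and $|F(s-)-G(s-)|<d$ if $s\ne\lceil\frac n2\rceil$" holds iff both of the following hold: $$F(s)-G(s)<d\ \text{ for all } s\in\mathbb Z \text{ with } s>\lfloor\tfrac n2\rfloor,\qquad G(s)-F(s-1)<d\ \text{ for all } s\in\mathbb Z\text{ with } s>\lceil\tfrac n2\rceil.$$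
   Context: $F(s-)$ denotes the left limit of $F$ at $s$. A distribution function is $F(s)=P(]-\infty,s])$. *)

theory Defs
  imports "HOL-Probability.Probability"
begin

definition distr_fun :: "real measure \<Rightarrow> real \<Rightarrow> real" where
  "distr_fun P s = measure P {..s}"

definition left_lim :: "(real \<Rightarrow> real) \<Rightarrow> real \<Rightarrow> real" where
  "left_lim F s = Lim (at_left s) F"

definition symmetric_about :: "real measure \<Rightarrow> real \<Rightarrow> bool" where
  "symmetric_about P c \<longleftrightarrow> distr P borel (\<lambda>x. 2 * c - x) = P"

end

theory Submission
  imports Defs
begin

lemma Ints_borel: "(\<int>::real set) \<in> sets borel"
  by (simp add: borel_closed closed_Ints)

lemma meas_Ints:
  fixes P :: "real measure"
  assumes "prob_space P" "sets P = sets borel" "measure P \<int> = 1" "A \<in> sets borel"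
  shows "measure P A = measure P (A \<inter> \<int>)"
proof -
  interpret prob_space P by fact
  have sp: "space P = UNIV" using assms(2) sets_eq_imp_space_eq by fastforce
  have Z: "\<int> \<in> sets P" unfolding assms(2) by (rule Ints_borel)
  have A: "A \<in> sets P" using assms by simp
  have c: "measure P (space P - \<int>) = 0" using prob_compl[OF Z] assms(3) by simp
  have "measure P (A - \<int>) \<le> measure P (space P - \<int>)"
    by (rule finite_measure_mono) (use Z sets.sets_into_space[OF A] in auto)
  hence z: "measure P (A - \<int>) = 0" using c measure_nonneg[of P "A - \<int>"] by linarith
  have u: "(A \<inter> \<int>) \<union> (A - \<int>) = A" by blast
  have "measure P ((A \<inter> \<int>) \<union> (A - \<int>)) = measure P (A \<inter> \<int>) + measure P (A - \<int>)"
    by (rule finite_measure_Union) (use A Z in auto)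
  thus ?thesis using z u by simp
qed

lemma F_floor:
  assumes "prob_space P" "sets P = sets borel" "measure P \<int> = 1"
  shows "distr_fun P x = distr_fun P (of_int \<lfloor>x\<rfloor>)"
proof -
  have "{..x} \<inter> \<int> = {..of_int \<lfloor>x\<rfloor>} \<inter> \<int>"
    by (auto elim!: Ints_cases) (metis floor_of_int floor_mono, meson floor_le_iff le_floor_iff order.trans)
  then show ?thesis unfolding distr_fun_def
    using meas_Ints[OF assms, of "{..x}"] meas_Ints[OF assms, of "{..of_int \<lfloor>x\<rfloor>}"] by simp
qed

lemma F_less:
  assumes "prob_space P" "sets P = sets borel" "measure P \<int> = 1"
  shows "measure P {..<y} = distr_fun P (of_int (\<lceil>y\<rceil> - 1))"
proof -
  have k: "(of_int m < y) = (of_int m \<le> (of_int (\<lceil>y\<rceil> - 1)::real))" for m :: int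
  proof -
    have "(of_int m < y) = (m < \<lceil>y\<rceil>)" by (simp add: less_ceiling_iff)
    also have "\<dots> = (m \<le> \<lceil>y\<rceil> - 1)" by linarith
    also have "\<dots> = (of_int m \<le> (of_int (\<lceil>y\<rceil> - 1)::real))" by (simp only: of_int_le_iff)
    finally show ?thesis .
  qed
  have "{..<y} \<inter> \<int> = {..of_int (\<lceil>y\<rceil> - 1)} \<inter> \<int>"
    by (auto elim!: Ints_cases simp: k)
  then show ?thesis unfolding distr_fun_def
    using meas_Ints[OF assms, of "{..<y}"] meas_Ints[OF assms, of "{..of_int (\<lceil>y\<rceil> - 1)}"] by simp
qed

lemma F_leftlim:
  assumes "prob_space P" "sets P = sets borel" "measure P \<int> = 1"
  shows "left_lim (distr_fun P) s = distr_fun P (of_int (\<lceil>s\<rceil> - 1))"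
proof -
  have "eventually (\<lambda>x. x \<in> {of_int (\<lceil>s\<rceil> - 1)<..<s}) (at_left s)"
    by (rule eventually_at_left_real) linarith
  hence "eventually (\<lambda>x. distr_fun P x = distr_fun P (of_int (\<lceil>s\<rceil> - 1))) (at_left s)"
  proof (rule eventually_mono)
    fix x assume "x \<in> {real_of_int (\<lceil>s\<rceil> - 1)<..<s}"
    hence "\<lfloor>x\<rfloor> = \<lceil>s\<rceil> - 1"
      by simp (smt (verit, best) ceiling_correct floor_eq_iff of_int_1 of_int_diff)
    thus "distr_fun P x = distr_fun P (of_int (\<lceil>s\<rceil> - 1))"
      using F_floor[OF assms, of x] by simp
  qed
  hence "(distr_fun P \<longlongrightarrow> distr_fun P (of_int (\<lceil>s\<rceil> - 1))) (at_left s)"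
    by (rule tendsto_eventually)
  thus ?thesis unfolding left_lim_def by (intro tendsto_Lim) (simp_all add: trivial_limit_at_left_real)
qed

lemma G_leftlim:
  assumes "continuous_on UNIV G"
  shows "left_lim G s = G s"
proof -
  have "(G \<longlongrightarrow> G s) (at_left s)"
    using assms by (metis continuous_on_def UNIV_I at_within_open open_UNIV tendsto_within_subset subset_UNIV)
  thus ?thesis unfolding left_lim_def by (intro tendsto_Lim) (simp_all add: trivial_limit_at_left_real)
qed

lemma G_less:
  assumes "prob_space Q" "sets Q = sets borel" "continuous_on UNIV (distr_fun Q)"
  shows "measure Q {..<y} = distr_fun Q y"
proof -
  interpret prob_space Q by fact
  have "(distr_fun Q \<longlongrightarrow> distr_fun Q y) (at_left y)"
    using assms(3) by (metis continuous_on_def UNIV_I at_within_open open_UNIV tendsto_within_subset subset_UNIV)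
  moreover have "eventually (\<lambda>x. distr_fun Q x \<le> measure Q {..<y}) (at_left y)"
    unfolding eventually_at_left_field
    by (rule exI[of _ "y - 1"]) (auto simp: distr_fun_def assms(2) intro!: finite_measure_mono)
  ultimately have "distr_fun Q y \<le> measure Q {..<y}"
    by (rule tendsto_upperbound) (simp add: trivial_limit_at_left_real)
  moreover have "measure Q {..<y} \<le> distr_fun Q y"
    by (auto simp: distr_fun_def assms(2) intro!: finite_measure_mono)
  ultimately show ?thesis by simp
qed

lemma symm_meas:
  fixes P :: "real measure"
  assumes "sets P = sets borel" "symmetric_about P (n/2)" "A \<in> sets borel"
  shows "measure P A = measure P ((\<lambda>x. n - x) -` A)"
proof -
  have sp: "space P = UNIV" using assms(1) sets_eq_imp_space_eq by fastforce
  have m: "(\<lambda>x. n - x) \<in> P \<rightarrow>\<^sub>M borel"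
    unfolding measurable_cong_sets[OF assms(1) refl] by simp
  have "measure P A = measure (distr P borel (\<lambda>x. n - x)) A"
    using assms(2) unfolding symmetric_about_def by simp
  also have "\<dots> = measure P ((\<lambda>x. n - x) -` A)"
    using measure_distr[OF m assms(3)] sp by simp
  finally show ?thesis .
qed

lemma symm_F:
  assumes "prob_space P" "sets P = sets borel" "symmetric_about P (n/2)"
  shows "distr_fun P x = 1 - measure P {..<n - x}"
proof -
  interpret prob_space P by fact
  have sp: "space P = UNIV" using assms(2) sets_eq_imp_space_eq by fastforce
  have "distr_fun P x = measure P ((\<lambda>y. n - y) -` {..x})"
    unfolding distr_fun_def using symm_meas[OF assms(2,3)] by simp
  also have "(\<lambda>y. n - y) -` {..x} = space P - {..<n-x}" using sp by auto
  also have "measure P \<dots> = 1 - measure P {..<n - x}"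
    by (rule prob_compl) (simp add: assms(2))
  finally show ?thesis .
qed

lemma n_Ints:
  assumes "prob_space P" "sets P = sets borel" "symmetric_about P (n/2)" "measure P \<int> = 1"
  shows "n \<in> \<int>"
proof (rule ccontr)
  assume nn: "n \<notin> \<int>"
  interpret prob_space P by fact
  let ?B = "(\<lambda>y. n - y) -` \<int>"
  have B: "?B \<in> sets P"
  proof -
    have m: "(\<lambda>x. n - x) \<in> P \<rightarrow>\<^sub>M borel"
      unfolding measurable_cong_sets[OF assms(2) refl] by simp
    have "(\<lambda>y. n - y) -` \<int> \<inter> space P \<in> sets P"
      by (rule measurable_sets[OF m Ints_borel])
    thus ?thesis using sets_eq_imp_space_eq[OF assms(2)] by simp
  qed
  have PB: "measure P ?B = 1" using symm_meas[OF assms(2,3) Ints_borel] assms(4) by simp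
  have disj: "?B \<inter> \<int> = {}"
  proof (safe)
    fix x assume "n - x \<in> \<int>" "x \<in> \<int>"
    hence "n - x + x \<in> \<int>" by (intro Ints_add)
    thus "x \<in> {}" using nn by simp
  qed
  have "measure P (?B \<union> \<int>) = 2"
    using finite_measure_Union[OF B _ disj] PB assms(4) Ints_borel assms(2) by simp
  moreover have "measure P (?B \<union> \<int>) \<le> 1" by (rule prob_le_1)
  ultimately show False by simp
qed


theorem lemma1p6:
  fixes P Q :: "real measure" and F G :: "real \<Rightarrow> real" and n d :: real
  assumes P_prob: "prob_space P" and P_sets: "sets P = sets borel"
    and Q_prob: "prob_space Q" and Q_sets: "sets Q = sets borel"
    and F_def: "F = distr_fun P" and G_def: "G = distr_fun Q"
    and P_Ints: "measure P \<int> = 1"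
    and G_cont: "continuous_on UNIV G" and G_mono: "strict_mono G"
    and P_symm: "symmetric_about P (n / 2)" and Q_symm: "symmetric_about Q (n / 2)"
    and d_def: "d = F (of_int \<lfloor>n / 2\<rfloor>) - G (of_int \<lfloor>n / 2\<rfloor>)"
  shows "n \<in> \<int>
    \<and> d = left_lim G (of_int \<lceil>n / 2\<rceil>) - left_lim F (of_int \<lceil>n / 2\<rceil>)
    \<and> (odd \<lfloor>n\<rfloor> \<longrightarrow> d = G ((n + 1) / 2) - 1 / 2)
    \<and> (even \<lfloor>n\<rfloor> \<longrightarrow> d = 1 / 2 * measure P {n / 2})
    \<and> ((\<forall>s::real.
           (s \<noteq> of_int \<lfloor>n / 2\<rfloor> \<longrightarrow> \<bar>F s - G s\<bar> < d)
         \<and> (s \<noteq> of_int \<lceil>n / 2\<rceil> \<longrightarrow> \<bar>left_lim F s - left_lim G s\<bar> < d))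
       \<longleftrightarrow>
       ((\<forall>s::int. s > \<lfloor>n / 2\<rfloor> \<longrightarrow> F (of_int s) - G (of_int s) < d)
        \<and> (\<forall>s::int. s > \<lceil>n / 2\<rceil> \<longrightarrow> G (of_int s) - F (of_int (s - 1)) < d)))"
proof -
  have nZ: "n \<in> \<int>" by (rule n_Ints[OF P_prob P_sets P_symm P_Ints])
  then obtain N where nN: "n = of_int N" by (auto elim: Ints_cases)
  define a where "a = N div 2"
  define c where "c = - ((- N) div 2)"
  have fl: "\<lfloor>n / 2\<rfloor> = a" unfolding a_def nN
    using floor_divide_of_int_eq[of N 2] by simp
  have cl: "\<lceil>n / 2\<rceil> = c" unfolding c_def nN
    using ceiling_divide_eq_div[of N 2] by simp
  have ac: "a + c = N" unfolding a_def c_def by presburger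
  have flN: "\<lfloor>n\<rfloor> = N" using nN by simp
  have Ff: "F x = F (of_int \<lfloor>x\<rfloor>)" for x
    unfolding F_def by (rule F_floor[OF P_prob P_sets P_Ints])
  have FL: "left_lim F s = F (of_int (\<lceil>s\<rceil> - 1))" for s
    unfolding F_def by (rule F_leftlim[OF P_prob P_sets P_Ints])
  have GL: "left_lim G s = G s" for s by (rule G_leftlim[OF G_cont])
  have SF: "F (of_int k) = 1 - F (of_int (N - k - 1))" for k
  proof -
    have "F (of_int k) = 1 - measure P {..<n - of_int k}"
      unfolding F_def by (rule symm_F[OF P_prob P_sets P_symm])
    also have "measure P {..<n - of_int k} = F (of_int (\<lceil>n - of_int k\<rceil> - 1))"
      unfolding F_def by (rule F_less[OF P_prob P_sets P_Ints])
    also have "\<lceil>n - of_int k\<rceil> = N - k" unfolding nN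
      by (metis ceiling_of_int of_int_diff)
    finally show ?thesis by simp
  qed
  have SG: "G x = 1 - G (n - x)" for x
  proof -
    have "G x = 1 - measure Q {..<n - x}"
      unfolding G_def by (rule symm_F[OF Q_prob Q_sets Q_symm])
    also have "measure Q {..<n - x} = G (n - x)"
      unfolding G_def by (rule G_less[OF Q_prob Q_sets G_cont[unfolded G_def]])
    finally show ?thesis .
  qed
  have SGk: "G (of_int k) = 1 - G (of_int (N - k))" for k
    using SG[of "of_int k"] nN by simp
  have Gle: "x \<le> y \<Longrightarrow> G x \<le> G y" for x y
    using G_mono by (simp add: strict_mono_less_eq)
  have Glt: "x < y \<Longrightarrow> G x < G y" for x y
    using G_mono by (simp add: strict_mono_less)
  have dd: "d = F (of_int a) - G (of_int a)" using d_def fl by simp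
  have d2: "d = G (of_int c) - F (of_int (c - 1))"
    using dd SF[of a] SGk[of a] ac
    by (smt (verit, best) add_diff_cancel_left' diff_diff_eq2 diff_minus_eq_add)
  have part2: "d = left_lim G (of_int \<lceil>n / 2\<rceil>) - left_lim F (of_int \<lceil>n / 2\<rceil>)"
    unfolding cl GL FL using d2 by simp
  have part3: "odd \<lfloor>n\<rfloor> \<longrightarrow> d = G ((n + 1) / 2) - 1 / 2"
  proof
    assume "odd \<lfloor>n\<rfloor>"
    hence o: "odd N" using flN by simp
    hence ca: "c = a + 1" unfolding a_def c_def by presburger
    have e1: "N - a - 1 = a" using ac ca by simp
    have "F (of_int a) = 1 - F (of_int a)" using SF[of a] unfolding e1 .
    hence Fa: "F (of_int a) = 1/2" by simp
    have "(n + 1) / 2 = of_int c" using ac ca nN by simp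
    hence "G ((n+1)/2) = 1 - G (of_int a)" using SGk[of c] ac
      by (metis add_diff_cancel_right')
    thus "d = G ((n + 1) / 2) - 1 / 2" using dd Fa by simp
  qed
  have part4: "even \<lfloor>n\<rfloor> \<longrightarrow> d = 1 / 2 * measure P {n / 2}"
  proof
    assume "even \<lfloor>n\<rfloor>"
    hence e: "even N" using flN by simp
    hence ca: "c = a" unfolding a_def c_def by presburger
    have e1: "N - a = a" using ac ca by simp
    have "G (of_int a) = 1 - G (of_int a)" using SGk[of a] unfolding e1 .
    hence Ga: "G (of_int a) = 1/2" by simp
    have e2: "N - a - 1 = a - 1" using e1 by simp
    have Fa: "F (of_int a) = 1 - F (of_int (a - 1))" using SF[of a] unfolding e2 .
    have n2: "n / 2 = of_int a" using ac ca nN by simp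
    interpret P: prob_space P by (rule P_prob)
    have "measure P {..of_int a} = measure P ({..<of_int a} \<union> {of_int a})"
      by (metis ivl_disj_un_singleton(2))
    also have "\<dots> = measure P {..<of_int a} + measure P {of_int a}"
      by (rule P.finite_measure_Union) (auto simp: P_sets)
    also have "measure P {..<of_int a} = F (of_int (a - 1))"
      unfolding F_def using F_less[OF P_prob P_sets P_Ints, of "of_int a"] by simp
    finally have "F (of_int a) = F (of_int (a - 1)) + measure P {of_int a}"
      unfolding F_def distr_fun_def by simp
    thus "d = 1 / 2 * measure P {n / 2}" using dd Ga Fa n2 by simp
  qed
  have part5: "((\<forall>s::real.
           (s \<noteq> of_int a \<longrightarrow> \<bar>F s - G s\<bar> < d)
         \<and> (s \<noteq> of_int c \<longrightarrow> \<bar>left_lim F s - left_lim G s\<bar> < d))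
       \<longleftrightarrow>
       ((\<forall>s::int. s > a \<longrightarrow> F (of_int s) - G (of_int s) < d)
        \<and> (\<forall>s::int. s > c \<longrightarrow> G (of_int s) - F (of_int (s - 1)) < d)))"
  proof
    assume L: "\<forall>s::real.
           (s \<noteq> of_int a \<longrightarrow> \<bar>F s - G s\<bar> < d)
         \<and> (s \<noteq> of_int c \<longrightarrow> \<bar>left_lim F s - left_lim G s\<bar> < d)"
    show "(\<forall>s::int. s > a \<longrightarrow> F (of_int s) - G (of_int s) < d)
        \<and> (\<forall>s::int. s > c \<longrightarrow> G (of_int s) - F (of_int (s - 1)) < d)"
    proof safe
      fix k :: int assume "k > a"
      hence "(of_int k::real) \<noteq> of_int a" by simp
      hence "\<bar>F (of_int k) - G (of_int k)\<bar> < d" using L by blast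
      thus "F (of_int k) - G (of_int k) < d" by linarith
    next
      fix k :: int assume "k > c"
      hence "(of_int k::real) \<noteq> of_int c" by simp
      hence "\<bar>left_lim F (of_int k) - left_lim G (of_int k)\<bar> < d" using L by blast
      thus "G (of_int k) - F (of_int (k - 1)) < d" unfolding FL GL by simp
    qed
  next
    assume R: "(\<forall>s::int. s > a \<longrightarrow> F (of_int s) - G (of_int s) < d)
        \<and> (\<forall>s::int. s > c \<longrightarrow> G (of_int s) - F (of_int (s - 1)) < d)"
    have R1: "k > a \<Longrightarrow> F (of_int k) - G (of_int k) < d" for k using R by blast
    have R2: "k > c \<Longrightarrow> G (of_int k) - F (of_int (k - 1)) < d" for k using R by blast
    have H: "G (of_int j) - F (of_int (j - 1)) \<le> d" for j
    proof (cases "j > c")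
      case True thus ?thesis using R2[of j] by simp
    next
      case False
      show ?thesis
      proof (cases "j = c")
        case True thus ?thesis using d2 by simp
      next
        case False
        hence "N - j > a" using \<open>\<not> j > c\<close> ac by simp
        hence "F (of_int (N - j)) - G (of_int (N - j)) < d" by (rule R1)
        moreover have "F (of_int (j - 1)) = 1 - F (of_int (N - j))"
          using SF[of "j - 1"] by (simp add: algebra_simps)
        ultimately show ?thesis using SGk[of j] by simp
      qed
    qed
    have A: "\<bar>F t - G t\<bar> < d" if tn: "t \<noteq> of_int a" for t
    proof -
      define k where "k = \<lfloor>t\<rfloor>"
      have k1: "of_int k \<le> t" and k2: "t < of_int k + 1" unfolding k_def by linarith+
      have Ft: "F t = F (of_int k)" unfolding k_def by (rule Ff)
      have A1: "F t - G t < d"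
      proof -
        have "G (of_int k) \<le> G t" using Gle[OF k1] .
        consider "k > a" | "k = a" | "k < a" by linarith
        thus ?thesis
        proof cases
          case 1 thus ?thesis using R1[of k] Ft \<open>G (of_int k) \<le> G t\<close> by simp
        next
          case 2
          hence "of_int a < t" using k1 tn by simp
          hence "G (of_int a) < G t" by (rule Glt)
          thus ?thesis using Ft 2 dd by simp
        next
          case 3
          hence "N - k > c" using ac by simp
          hence "G (of_int (N - k)) - F (of_int (N - k - 1)) < d" by (rule R2)
          moreover have "F (of_int k) = 1 - F (of_int (N - k - 1))" by (rule SF)
          ultimately show ?thesis using SGk[of k] Ft \<open>G (of_int k) \<le> G t\<close> by simp
        qed
      qed
      have A2: "G t - F t < d"
      proof -
        have "G t < G (of_int (k + 1))" using Glt[of t "of_int (k+1)"] k2 by simp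
        moreover have "G (of_int (k + 1)) - F (of_int (k + 1 - 1)) \<le> d" by (rule H)
        ultimately show ?thesis using Ft by simp
      qed
      show ?thesis using A1 A2 by linarith
    qed
    show "\<forall>s::real.
           (s \<noteq> of_int a \<longrightarrow> \<bar>F s - G s\<bar> < d)
         \<and> (s \<noteq> of_int c \<longrightarrow> \<bar>left_lim F s - left_lim G s\<bar> < d)"
    proof (intro allI conjI impI)
      fix s :: real assume "s \<noteq> of_int a" thus "\<bar>F s - G s\<bar> < d" by (rule A)
    next
      fix s :: real assume sc: "s \<noteq> of_int c"
      define t where "t = n - s"
      have tn: "t \<noteq> of_int a"
      proof
        assume "t = of_int a"
        hence "s = of_int N - of_int a" unfolding t_def nN by simp
        also have "\<dots> = of_int c" using ac by (simp flip: of_int_diff)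
        finally show False using sc by simp
      qed
      have c1: "of_int \<lceil>s\<rceil> - 1 < s" "s \<le> of_int \<lceil>s\<rceil>" using ceiling_correct[of s] by auto
      have ft: "\<lfloor>t\<rfloor> = N - \<lceil>s\<rceil>" unfolding t_def nN floor_eq_iff
        using c1 by simp
      have "left_lim F s = F (of_int (\<lceil>s\<rceil> - 1))" by (rule FL)
      also have "\<dots> = 1 - F (of_int (N - \<lceil>s\<rceil>))"
        using SF[of "\<lceil>s\<rceil> - 1"] by (simp add: algebra_simps)
      also have "F (of_int (N - \<lceil>s\<rceil>)) = F t" using Ff[of t] ft by simp
      finally have "left_lim F s = 1 - F t" .
      moreover have "left_lim G s = 1 - G t" unfolding GL t_def by (rule SG)
      ultimately show "\<bar>left_lim F s - left_lim G s\<bar> < d" using A[OF tn] by simp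
    qed
  qed
  show ?thesis using nZ part2 part3 part4 part5 unfolding fl cl by blast
qed


end
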